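(* For every $\rho>-1$, the function $C\mapsto F^{\rm bsc}(\rho;C)$ is concave on $[0,1]$. It is non-decreasing in $C$ for $-1<\rho\le0$ and non-increasing in $C$ for $\rho\ge0$.
   Context: Logarithms are base 2. Let $h(p)=-p\log p-(1-p)\log(1-p)$ be the binary entropy function and let $h^{-1}$ be its inverse on $[0,\tfrac12]$. For $C\in[0,1]$ and $\rho>-1$ define $$F^{\rm bsc}(\rho;C)=2^{-\rho}\Bigl(\varepsilon^{1/(1+\rho)}+(1-\varepsilon)^{1/(1+\rho)}\Bigr)^{1+\rho},\qquad \varepsilon=h^{-1}(1-C).$$ *)

theory Defs
  imports "HOL-Analysis.Analysis"
begin

definition bin_entropy :: "real \<Rightarrow> real" where
  "bin_entropy p = (if p = 0 \<or> p = 1 then 0 else - p * log 2 p - (1 - p) * log 2 (1 - p))"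

definition bin_entropy_inv :: "real \<Rightarrow> real" where
  "bin_entropy_inv y = (THE p. p \<in> {0..1/2} \<and> bin_entropy p = y)"

definition F_bsc :: "real \<Rightarrow> real \<Rightarrow> real" where
  "F_bsc \<rho> C = (let \<epsilon> = bin_entropy_inv (1 - C) in
     2 powr (-\<rho>) * (\<epsilon> powr (1 / (1 + \<rho>)) + (1 - \<epsilon>) powr (1 / (1 + \<rho>))) powr (1 + \<rho>))"

end

theory Submission
  imports Defs
begin


lemma H_formula: "0 < e \<Longrightarrow> e < 1 \<Longrightarrow> bin_entropy e = (- e * ln e - (1 - e) * ln (1 - e)) / ln 2"
  by (simp add: bin_entropy_def log_def field_simps)

lemma H_deriv:
  assumes "0 < e" "e < 1"
  shows "(bin_entropy has_real_derivative (ln (1 - e) - ln e) / ln 2) (at e)"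
proof -
  have "((\<lambda>x::real. (- x * ln x - (1 - x) * ln (1 - x))) has_real_derivative (ln (1 - e) - ln e)) (at e)"
    using assms by (auto intro!: derivative_eq_intros)
  then have "((\<lambda>x::real. (- x * ln x - (1 - x) * ln (1 - x)) / ln 2) has_real_derivative (ln (1 - e) - ln e) / ln 2) (at e)"
    by (rule DERIV_cdivide)
  moreover have ev: "\<forall>\<^sub>F x in nhds e. (- x * ln x - (1 - x) * ln (1 - x)) / ln 2 = bin_entropy x"
  proof -
    have "\<forall>\<^sub>F x in nhds e. x \<in> {0<..<1}" using assms by (intro eventually_nhds_in_open) auto
    then show ?thesis by eventually_elim (simp add: H_formula)
  qed
  ultimately show ?thesis
    using DERIV_cong_ev[OF refl ev refl, of "(ln (1 - e) - ln e) / ln 2"] by simp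
qed

lemma xlnx_lim: "((\<lambda>x::real. x * ln x) \<longlongrightarrow> 0) (at_right 0)"
proof -
  have "((\<lambda>t. ln (inverse t) / inverse t) \<longlongrightarrow> (0::real)) (at_right 0)"
    using filterlim_compose[OF ln_x_over_x_tendsto_0 filterlim_inverse_at_top_right] by (simp add: o_def)
  then have A: "((\<lambda>t. - (ln (inverse t) / inverse t)) \<longlongrightarrow> (0::real)) (at_right 0)"
    by (intro tendsto_minus_cancel_left[THEN iffD1]) simp
  have ev: "\<forall>\<^sub>F t in at_right (0::real). - (ln (inverse t) / inverse t) = t * ln t"
    using eventually_at_right_less[of 0] by eventually_elim (simp add: ln_div field_simps)
  show ?thesis using tendsto_cong[OF ev] A by simp
qed

lemma H_lim0: "(bin_entropy \<longlongrightarrow> 0) (at_right 0)"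
proof -
  have A: "((\<lambda>x::real. (- x * ln x - (1 - x) * ln (1 - x)) / ln 2) \<longlongrightarrow> 0) (at_right 0)"
  proof -
    have "((\<lambda>x::real. (- (x * ln x) - (1 - x) * ln (1 - x)) / ln 2) \<longlongrightarrow> (- 0 - (1 - 0) * ln (1 - 0)) / ln 2) (at_right 0)"
      by (intro tendsto_intros xlnx_lim) auto
    then show ?thesis by simp
  qed
  have ev: "\<forall>\<^sub>F x in at_right 0. (- x * ln x - (1 - x) * ln (1 - x)) / ln 2 = bin_entropy x"
  proof -
    have "\<forall>\<^sub>F x in at_right (0::real). x \<in> {0<..<1}" by (rule eventually_at_right_real) simp
    then show ?thesis by eventually_elim (simp add: H_formula)
  qed
  show ?thesis using tendsto_cong[OF ev] A by simp
qed

lemma H_0: "bin_entropy 0 = 0" by (simp add: bin_entropy_def)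
lemma H_half: "bin_entropy (1/2) = 1"
  by (simp add: bin_entropy_def log_divide)

lemma H_cont: "continuous_on {0..1/2} bin_entropy"
unfolding continuous_on_eq_continuous_within
proof (intro ballI)
  fix x :: real assume "x \<in> {0..1/2}"
  then have x: "0 \<le> x" "x \<le> 1/2" by auto
  show "continuous (at x within {0..1/2}) bin_entropy"
  proof (cases "x = 0")
    case True
    have "(bin_entropy \<longlongrightarrow> bin_entropy 0) (at 0 within {0..1/2})"
      using H_lim0 by (simp add: H_0 at_within_Icc_at_right)
    then show ?thesis using True by (simp add: continuous_within)
  next
    case False
    then have "isCont bin_entropy x" using x by (intro DERIV_isCont[OF H_deriv]) auto
    then show ?thesis using continuous_at_imp_continuous_at_within by blast
  qed
qed

lemma H_strict: "0 \<le> x \<Longrightarrow> x < y \<Longrightarrow> y \<le> 1/2 \<Longrightarrow> bin_entropy x < bin_entropy y"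
proof -
  assume a: "0 \<le> x" "x < y" "y \<le> 1/2"
  show ?thesis
  proof (rule DERIV_pos_imp_increasing_open[OF a(2)])
    fix z assume z: "x < z" "z < y"
    have "ln z < ln (1 - z)" using z a by (intro ln_less_cancel_iff[THEN iffD2]) auto
    then show "\<exists>d. DERIV bin_entropy z :> d \<and> 0 < d"
      using z a by (intro exI[of _ "(ln (1 - z) - ln z) / ln 2"]) (auto intro!: H_deriv)
  next
    show "continuous_on {x..y} bin_entropy" by (rule continuous_on_subset[OF H_cont]) (use a in auto)
  qed
qed

lemma H_inj: "0 \<le> x \<Longrightarrow> x \<le> 1/2 \<Longrightarrow> 0 \<le> y \<Longrightarrow> y \<le> 1/2 \<Longrightarrow> bin_entropy x = bin_entropy y \<Longrightarrow> x = y"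

  using H_strict[of x y] H_strict[of y x] by (cases x y rule: linorder_cases) auto

lemma Hinv:
  assumes "0 \<le> y" "y \<le> 1"
  shows "bin_entropy_inv y \<in> {0..1/2} \<and> bin_entropy (bin_entropy_inv y) = y"
proof -
  have "\<exists>x. 0 \<le> x \<and> x \<le> 1/2 \<and> bin_entropy x = y"
    by (rule IVT') (use assms H_cont in \<open>simp_all add: H_0 H_half\<close>)
  then obtain p where p: "0 \<le> p" "p \<le> 1/2" "bin_entropy p = y" by blast
  have "(THE p. p \<in> {0..1/2} \<and> bin_entropy p = y) = p"
  proof (rule the_equality)
    show "p \<in> {0..1/2} \<and> bin_entropy p = y" using p by simp
  next
    fix q assume "q \<in> {0..1/2} \<and> bin_entropy q = y"
    then show "q = p" using H_inj[of q p] p by simp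
  qed
  then show ?thesis using p by (simp add: bin_entropy_inv_def)
qed

lemma Hinv_mono:
  assumes "0 \<le> x" "x < y" "y \<le> 1"
  shows "bin_entropy_inv x < bin_entropy_inv y"
proof -
  have a: "bin_entropy_inv y \<in> {0..1/2}" "bin_entropy (bin_entropy_inv y) = y"
    using Hinv[of y] assms by auto
  have b: "bin_entropy_inv x \<in> {0..1/2}" "bin_entropy (bin_entropy_inv x) = x"
    using Hinv[of x] assms by auto
  show ?thesis
  proof (rule ccontr)
    assume "\<not> ?thesis"
    then have le: "bin_entropy_inv y \<le> bin_entropy_inv x" by simp
    show False
    proof (cases "bin_entropy_inv x = bin_entropy_inv y")
      case True
      have "x = y" using b(2)[unfolded True] a(2) by simp
      then show False using assms by simp
    next
      case False
      then have "bin_entropy (bin_entropy_inv y) < bin_entropy (bin_entropy_inv x)"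
        using le a b by (intro H_strict) auto
      then show False using a b assms by simp
    qed
  qed
qed

lemma cmvt:
  fixes f g f' g' :: "real \<Rightarrow> real"
  assumes "a < b" "continuous_on {a..b} f" "continuous_on {a..b} g"
    and "\<And>x. a < x \<Longrightarrow> x < b \<Longrightarrow> (f has_real_derivative f' x) (at x)"
    and "\<And>x. a < x \<Longrightarrow> x < b \<Longrightarrow> (g has_real_derivative g' x) (at x)"
  shows "\<exists>x. a < x \<and> x < b \<and> (f b - f a) * g' x = (g b - g a) * f' x"
proof -
  define h where "h x = (f b - f a) * g x - (g b - g a) * f x" for x
  have hc: "continuous_on {a..b} h" unfolding h_def using assms by (intro continuous_intros)
  define D where "D x = (f b - f a) * g' x - (g b - g a) * f' x" for x
  have hd: "(h has_derivative (\<lambda>t. D x * t)) (at x)" if "a < x" "x < b" for x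
  proof -
    have "(h has_real_derivative D x) (at x)"
      unfolding h_def D_def using assms(4)[OF that] assms(5)[OF that]
      by (auto intro!: derivative_eq_intros)
    then show ?thesis by (simp add: has_field_derivative_def)
  qed
  obtain x where x: "a < x" "x < b" "h b - h a = D x * (b - a)"
    using mvt[OF assms(1) hc, of "\<lambda>x t. D x * t"] hd by blast
  moreover have "h b - h a = 0" by (simp add: h_def algebra_simps)
  ultimately show ?thesis using assms(1) by (auto simp: D_def)
qed



lemma I1: assumes "(y::real) \<ge> 0" shows "2 * y \<le> exp y - exp (- y)"
proof -
  define f where "f t = exp t - exp (- t) - 2 * t" for t :: real
  have "f 0 \<le> f y"
  proof (rule DERIV_nonneg_imp_increasing_open[OF assms])
    fix t :: real
    have "0 \<le> (exp t - 1)^2 / exp t" by simp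
    also have "(exp t - 1)^2 / exp t = exp t + exp (- t) - 2"
      by (simp add: exp_minus field_simps power2_eq_square)
    finally have "0 \<le> exp t + exp (- t) - 2" .
    moreover have "(f has_real_derivative exp t + exp (- t) - 2) (at t)"
      unfolding f_def by (auto intro!: derivative_eq_intros)
    ultimately show "\<exists>d. (f has_real_derivative d) (at t) \<and> 0 \<le> d" by blast
  next
    show "continuous_on {0..y} f" unfolding f_def by (intro continuous_intros)
  qed
  then show ?thesis by (simp add: f_def)
qed

lemma I2: assumes "(y::real) \<le> 0" shows "0 \<le> (2 - y) * exp y - 2 - y"
proof -
  define m where "m t = (2 - t) * exp t - 2 - t" for t :: real
  have "m 0 \<le> m y"
  proof (rule DERIV_nonpos_imp_decreasing_open[OF assms])
    fix t :: real assume t: "y < t" "t < 0"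
    have "1 + (- t) \<le> exp (- t)" by (rule exp_ge_add_one_self)
    then have "(1 - t) * exp t \<le> exp (- t) * exp t" by (intro mult_right_mono) auto
    then have "(1 - t) * exp t - 1 \<le> 0" by (simp add: exp_minus)
    moreover have "(m has_real_derivative (1 - t) * exp t - 1) (at t)"
      unfolding m_def by (auto intro!: derivative_eq_intros simp: algebra_simps)
    ultimately show "\<exists>d. (m has_real_derivative d) (at t) \<and> d \<le> 0" by blast
  next
    show "continuous_on {y..0} m" unfolding m_def by (intro continuous_intros)
  qed
  then show ?thesis by (simp add: m_def)
qed

lemma Kineq:
  fixes s b :: real
  assumes s: "s > 0" and b: "b > -1"
  shows "(b * s) * (exp (b * s) - 1) / (1 + exp (s + b * s)) \<le> exp (b * s) - 1 - b * s"
proof -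
  define y where "y = b * s"
  define Y where "Y = exp y"
  have Y0: "Y > 0" by (simp add: Y_def)
  have num: "0 \<le> y * (Y - 1)"
  proof (cases "y \<ge> 0")
    case True then have "Y \<ge> 1" by (simp add: Y_def)
    then show ?thesis using True by simp
  next
    case False then have "Y \<le> 1" by (simp add: Y_def)
    then show ?thesis using False by (simp add: mult_nonpos_nonpos)
  qed
  show ?thesis
  proof (cases "y \<ge> 0")
    case True
    have "exp (s + y) \<ge> Y" unfolding Y_def using s by simp
    then have "y * (Y - 1) / (1 + exp (s + y)) \<le> y * (Y - 1) / (1 + Y)"
      using num Y0 by (intro divide_left_mono) auto
    also have "\<dots> \<le> Y - 1 - y"
    proof -
      have "2 * y \<le> Y - 1 / Y" using I1[OF True] by (simp add: Y_def exp_minus inverse_eq_divide)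
      then have "2 * y * Y \<le> Y * Y - 1" using Y0 by (simp add: field_simps)
      then have "y * (Y - 1) \<le> (Y - 1 - y) * (1 + Y)" by (simp add: algebra_simps)
      then show ?thesis using Y0 by (simp add: divide_le_eq)
    qed
    finally show ?thesis by (simp add: y_def Y_def)
  next
    case False
    then have "b < 0" using s by (simp add: y_def zero_le_mult_iff) 
    have "s + y = s * (1 + b)" by (simp add: y_def algebra_simps)
    then have "s + y > 0" using s b by simp
    then have "exp (s + y) \<ge> 1" by simp
    then have "y * (Y - 1) / (1 + exp (s + y)) \<le> y * (Y - 1) / 2"
      using num by (intro divide_left_mono) (auto simp: add_pos_pos)
    also have "\<dots> \<le> Y - 1 - y"
      using I2[of y] False by (simp add: Y_def field_simps)
    finally show ?thesis by (simp add: y_def Y_def)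
  qed
qed

definition psi :: "real \<Rightarrow> real \<Rightarrow> real" where
  "psi r s = exp (r * ln (1 + exp (- (1/(1+r)) * s))) * (1 - exp (- (1/(1+r) - 1) * s)) / s"

lemma psi_deriv:
  fixes r s :: real
  assumes r: "r > -1" and s: "s > 0"
  defines "a \<equiv> 1/(1+r)" and "b \<equiv> 1/(1+r) - 1"
  defines "E \<equiv> exp (- a * s)" and "R \<equiv> 1 - exp (- b * s)"
  shows "(psi r has_real_derivative
     exp (r * ln (1 + E)) * (r * (- a * E) / (1 + E) * R * s + b * exp (- b * s) * s - R) / s^2) (at s)"
proof -
  have p: "1 + exp (- a * s) > 0" by (simp add: add_pos_pos)
  have hb: "b = a - 1" by (simp add: b_def a_def)
  show ?thesis
    unfolding psi_def a_def[symmetric] b_def[symmetric]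
    apply (rule derivative_eq_intros refl | simp add: add_pos_pos)+
    using s apply simp
    unfolding E_def R_def hb power2_eq_square
    apply (rule arg_cong[of _ _ "\<lambda>x. x / (s * s)"])
    apply (simp add: algebra_simps)
    done
qed

lemma alg: fixes Y W b s :: real assumes "Y > 0" "W > 0"
  shows "(b/(1+W) * (1 - 1/Y) * s + b * (1/Y) * s - (1 - 1/Y)) * Y = b * s * (Y - 1)/(1 + W) - (Y - 1 - b * s)"
proof -
  have "(1 - 1/Y) * Y = Y - 1" using assms by (simp add: field_simps)
  moreover have "(1/Y) * Y = 1" using assms by simp
  ultimately show ?thesis using assms by (simp add: algebra_simps)
qed

lemma psi_deriv_nonpos:
  fixes r s :: real
  assumes r: "r > -1" and s: "s > 0"
  defines "a \<equiv> 1/(1+r)" and "b \<equiv> 1/(1+r) - 1"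
  defines "E \<equiv> exp (- a * s)" and "R \<equiv> 1 - exp (- b * s)"
  shows "exp (r * ln (1 + E)) * (r * (- a * E) / (1 + E) * R * s + b * exp (- b * s) * s - R) / s^2 \<le> 0"
proof -
  have r1: "1 + r \<noteq> 0" using r by linarith
  have ra: "r * a = - b" using r1 by (simp add: a_def b_def field_simps)
  have ab: "a = 1 + b" by (simp add: a_def b_def)
  define Y where "Y = exp (b * s)"
  define W where "W = exp (s + b * s)"
  have Y0: "Y > 0" and W0: "W > 0" by (auto simp: Y_def W_def)
  have as: "- a * s = - (s + b * s)" using ab by (simp add: algebra_simps)
  have EW: "E = 1 / W" unfolding E_def W_def as exp_minus by (simp add: inverse_eq_divide)
  have eb: "exp (- b * s) = 1 / Y" unfolding Y_def by (simp add: exp_minus inverse_eq_divide)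
  have br: "(r * (- a * E) / (1 + E) * R * s + b * exp (- b * s) * s - R) * Y
      = (b * s) * (Y - 1) / (1 + W) - (Y - 1 - b * s)"
  proof -
    have "r * (- a * E) = b * E" using ra by (simp add: algebra_simps)
    then have q: "r * (- a * E) / (1 + E) = b / (1 + W)"
      using W0 unfolding EW by (simp add: field_simps)
    have W1: "1 + W \<noteq> 0" using W0 by simp
    have W2: "Y + W * Y \<noteq> 0" using W0 Y0 by (metis add_pos_pos mult_pos_pos less_irrefl)
    show ?thesis unfolding q R_def eb using alg[OF Y0 W0, of b s] by simp
  qed
  have K: "(b * s) * (Y - 1) / (1 + W) \<le> Y - 1 - b * s"
    using Kineq[OF s, of b] r unfolding Y_def W_def by (simp add: b_def)
  have "(r * (- a * E) / (1 + E) * R * s + b * exp (- b * s) * s - R) * Y \<le> 0"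
    using br K by simp
  then have "r * (- a * E) / (1 + E) * R * s + b * exp (- b * s) * s - R \<le> 0"
    using Y0 by (simp add: mult_le_0_iff)
  then have "exp (r * ln (1 + E)) * (r * (- a * E) / (1 + E) * R * s + b * exp (- b * s) * s - R) \<le> 0"
    by (intro mult_nonneg_nonpos) auto
  moreover have "s^2 > 0" using s by simp
  ultimately show ?thesis by (rule divide_nonpos_pos)
qed

lemma psi_antimono:
  assumes r: "r > -1" and s: "0 < s1" "s1 \<le> s2"
  shows "psi r s2 \<le> psi r s1"
proof (rule DERIV_nonpos_imp_decreasing_open[OF s(2)])
  fix x assume x: "s1 < x" "x < s2"
  then show "\<exists>y. (psi r has_real_derivative y) (at x) \<and> y \<le> 0"
    using psi_deriv[OF r, of x] psi_deriv_nonpos[OF r, of x] s by auto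
next
  show "continuous_on {s1..s2} (psi r)"
  proof (rule DERIV_atLeastAtMost_imp_continuous_on)
    fix x assume "s1 \<le> x" "x \<le> s2"
    then have "x > 0" using s by simp
    then show "\<exists>y. DERIV (psi r) x :> y" using psi_deriv[OF r, of x] by blast
  qed
qed



definition Gf :: "real \<Rightarrow> real \<Rightarrow> real" where
  "Gf r e = 2 powr (-r) * (e powr (1/(1+r)) + (1-e) powr (1/(1+r))) powr (1+r)"

definition Gd :: "real \<Rightarrow> real \<Rightarrow> real" where
  "Gd r e = 2 powr (-r) * (e powr (1/(1+r)) + (1-e) powr (1/(1+r))) powr r
     * (e powr (1/(1+r) - 1) - (1-e) powr (1/(1+r) - 1))"

lemma G_deriv:
  assumes r: "r > -1" and e: "0 < e" "e < 1"
  shows "(Gf r has_real_derivative Gd r e) (at e)"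
proof -
  define a where "a = 1/(1+r)"
  have r1: "1 + r > 0" using r by linarith
  have ar: "(1 + r) * a = 1" using r1 by (simp add: a_def)
  have S: "e powr a + (1-e) powr a > 0" using e by (simp add: add_pos_pos)
  have dS: "((\<lambda>x. x powr a + (1-x) powr a) has_real_derivative a * e powr (a-1) - a * (1-e) powr (a-1)) (at e)"
    using e by (auto intro!: derivative_eq_intros)
  have dP: "((\<lambda>x. (x powr a + (1-x) powr a) powr (1+r)) has_real_derivative
      (1+r) * (e powr a + (1-e) powr a) powr (1 + r - 1) * (a * e powr (a-1) - a * (1-e) powr (a-1))) (at e)"
    by (rule DERIV_fun_powr[OF dS S, simplified])
  have "(Gf r has_real_derivative 2 powr (-r) * ((1+r) * (e powr a + (1-e) powr a) powr (1 + r - 1) * (a * e powr (a-1) - a * (1-e) powr (a-1)))) (at e)"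
    unfolding Gf_def a_def[symmetric] by (rule DERIV_cmult[OF dP])
  moreover have "2 powr (-r) * ((1+r) * (e powr a + (1-e) powr a) powr (1 + r - 1) * (a * e powr (a-1) - a * (1-e) powr (a-1))) = Gd r e"
  proof -
    have "(1+r) * (a * e powr (a-1) - a * (1-e) powr (a-1)) = ((1+r) * a) * (e powr (a-1) - (1-e) powr (a-1))"
      by (simp add: algebra_simps)
    also have "\<dots> = e powr (a-1) - (1-e) powr (a-1)" using ar by simp
    finally have h: "(1+r) * (a * e powr (a-1) - a * (1-e) powr (a-1)) = e powr (a-1) - (1-e) powr (a-1)" .
    show ?thesis unfolding Gd_def a_def[symmetric] using h by (simp add: mult.assoc[symmetric])
  qed
  ultimately show ?thesis by simp
qed

lemma G_cont:
  assumes r: "r > -1"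
  shows "continuous_on {0..1/2} (Gf r)"
proof -
  define a where "a = 1/(1+r)"
  have a0: "a > 0" using r by (simp add: a_def)
  have c1: "continuous_on {0..1/2} (\<lambda>x::real. x powr a)"
    by (rule continuous_on_powr') (use a0 in \<open>auto intro: continuous_intros\<close>)
  have c2: "continuous_on {0..1/2} (\<lambda>x::real. (1 - x) powr a)"
    by (rule continuous_on_powr') (use a0 in \<open>auto intro: continuous_intros\<close>)
  have pos: "\<forall>x\<in>{0..1/2}. x powr a + (1 - x) powr a \<noteq> 0"
  proof
    fix x :: real assume "x \<in> {0..1/2}"
    then have "(1 - x) powr a > 0" "x powr a \<ge> 0" by auto
    then show "x powr a + (1 - x) powr a \<noteq> 0" by linarith
  qed
  show ?thesis unfolding Gf_def a_def[symmetric]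
    by (intro continuous_intros c1 c2 continuous_on_powr pos)
qed

lemma Gd_eq:
  assumes r: "r > -1" and e: "0 < e" "e < 1/2"
  defines "s \<equiv> ln (1 - e) - ln e"
  shows "Gd r e = - (2 powr (-r) * s * psi r s)"
proof -
  define a where "a = 1/(1+r)"
  define b where "b = a - 1"
  define L1 where "L1 = ln (1 - e)"
  define L0 where "L0 = ln e"
  have sL: "s = L1 - L0" by (simp add: s_def L1_def L0_def)
  have r1: "1 + r \<noteq> 0" using r by linarith
  have rab: "r * a + b = 0" using r1 by (simp add: a_def b_def field_simps)
  have pa0: "e powr a = exp (a * L0)" "e powr b = exp (b * L0)" using e by (simp_all add: powr_def L0_def mult.commute)
  have pa1: "(1-e) powr a = exp (a * L1)" "(1-e) powr b = exp (b * L1)" using e by (simp_all add: powr_def L1_def mult.commute)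
  define E where "E = exp (- a * s)"
  have "exp (a * L0) = exp (a * L1) * E" unfolding E_def sL by (simp add: exp_add[symmetric] algebra_simps)
  then have S: "e powr a + (1-e) powr a = exp (a * L1) * (1 + E)" unfolding pa0 pa1 by (simp add: algebra_simps)
  have E0: "1 + E > 0" unfolding E_def by (simp add: add_pos_pos)
  have Sr: "(e powr a + (1-e) powr a) powr r = exp (r * a * L1) * exp (r * ln (1 + E))"
  proof -
    have pp: "exp (a * L1) * (1 + E) > 0" using E0 by simp
    have lnS: "ln (exp (a * L1) * (1 + E)) = a * L1 + ln (1 + E)" using E0 by (simp add: ln_mult)
    have "(exp (a * L1) * (1 + E)) powr r = exp (r * ln (exp (a * L1) * (1 + E)))"
      using pp E0 unfolding powr_def by (simp del: ln_mult)
    also have "\<dots> = exp (r * (a * L1 + ln (1 + E)))" by (simp only: lnS)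
    also have "\<dots> = exp (r * a * L1) * exp (r * ln (1 + E))"
      by (simp add: distrib_left exp_add mult.assoc)
    finally show ?thesis unfolding S .
  qed
  have "exp (b * L0) = exp (b * L1) * exp (- b * s)" unfolding sL by (simp add: exp_add[symmetric] algebra_simps)
  then have D: "e powr b - (1-e) powr b = - exp (b * L1) * (1 - exp (- b * s))"
    unfolding pa0 pa1 by (simp add: algebra_simps)
  have one: "exp (r * a * L1) * exp (b * L1) = 1"
  proof -
    have "r * a * L1 + b * L1 = (r * a + b) * L1" by (simp add: algebra_simps)
    then have "r * a * L1 + b * L1 = 0" using rab by simp
    then show ?thesis by (simp add: exp_add[symmetric])
  qed
  have spos: "s > 0"
  proof -
    have "ln e < ln (1 - e)" using e by (subst ln_less_cancel_iff) auto
    then show ?thesis by (simp add: s_def)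
  qed
  have "Gd r e = 2 powr (-r) * (exp (r * a * L1) * exp (r * ln (1 + E))) * (- exp (b * L1) * (1 - exp (- b * s)))"
    unfolding Gd_def a_def[symmetric] b_def[symmetric] Sr[symmetric] D[symmetric] by simp
  also have "\<dots> = - (2 powr (-r) * (exp (r * a * L1) * exp (b * L1)) * (exp (r * ln (1 + E)) * (1 - exp (- b * s))))"
    by (simp add: algebra_simps)
  also have "\<dots> = - (2 powr (-r) * (exp (r * ln (1 + E)) * (1 - exp (- b * s))))"
    by (simp only: one mult_1_right)
  also have "\<dots> = - (2 powr (-r) * s * psi r s)"
    unfolding psi_def E_def a_def b_def using spos by simp
  finally show ?thesis .
qed



definition phi :: "real \<Rightarrow> real \<Rightarrow> real" where
  "phi r e = - Gd r e / ((ln (1 - e) - ln e) / ln 2)"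

lemma s_pos: "0 < e \<Longrightarrow> e < 1/2 \<Longrightarrow> ln (1 - e) - ln e > (0::real)"
proof -
  assume e: "0 < e" "e < 1/2"
  have "ln e < ln (1 - e)" using e by (subst ln_less_cancel_iff) auto
  then show ?thesis by simp
qed

lemma phi_eq:
  assumes r: "r > -1" and e: "0 < e" "e < 1/2"
  shows "phi r e = 2 powr (-r) * ln 2 * psi r (ln (1 - e) - ln e)"
proof -
  define s where "s = ln (1 - e) - ln e"
  have sp: "s > 0" using s_pos[OF e] by (simp add: s_def)
  have "phi r e = (2 powr (-r) * s * psi r s) / (s / ln 2)"
    unfolding phi_def Gd_eq[OF r e] s_def by simp
  also have "\<dots> = 2 powr (-r) * ln 2 * psi r s" using sp by (simp add: field_simps)
  finally show ?thesis by (simp add: s_def)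
qed

lemma phi_mono:
  assumes r: "r > -1" and e: "0 < e1" "e1 \<le> e2" "e2 < 1/2"
  shows "phi r e1 \<le> phi r e2"
proof -
  have s2: "ln (1 - e2) - ln e2 > 0" using s_pos[of e2] e by simp
  have "ln e1 \<le> ln e2" using e by simp
  moreover have "ln (1 - e2) \<le> ln (1 - e1)" using e by simp
  ultimately have "ln (1 - e2) - ln e2 \<le> ln (1 - e1) - ln e1" by simp
  then have "psi r (ln (1 - e1) - ln e1) \<le> psi r (ln (1 - e2) - ln e2)"
    using psi_antimono[OF r s2] by simp
  then show ?thesis unfolding phi_eq[OF r e(1) order.strict_trans1[OF e(2,3)]] phi_eq[OF r order.strict_trans2[OF e(1,2)] e(3)]
    by (intro mult_left_mono) auto
qed

lemma phi_sign:
  assumes r: "r > -1" and e: "0 < e" "e < 1/2"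
  shows "(r \<le> 0 \<longrightarrow> phi r e \<ge> 0) \<and> (r \<ge> 0 \<longrightarrow> phi r e \<le> 0)"
proof -
  define b where "b = 1/(1+r) - 1"
  have hp: "(ln (1 - e) - ln e) / ln 2 > 0" using s_pos[OF e] by simp
  have K: "2 powr (-r) * (e powr (1/(1+r)) + (1-e) powr (1/(1+r))) powr r \<ge> 0" by simp
  have "r \<le> 0 \<Longrightarrow> Gd r e \<le> 0"
  proof -
    assume r0: "r \<le> 0"
    have "b \<ge> 0" using r r0 by (simp add: b_def field_simps)
    then have "e powr b \<le> (1 - e) powr b" using e by (intro powr_mono2) auto
    then show "Gd r e \<le> 0" unfolding Gd_def b_def[symmetric] using K by (intro mult_nonneg_nonpos) auto
  qed
  moreover have "r \<ge> 0 \<Longrightarrow> Gd r e \<ge> 0"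
  proof -
    assume r0: "r \<ge> 0"
    have "b \<le> 0" using r r0 by (simp add: b_def field_simps)
    then have "(1 - e) powr b \<le> e powr b" using e by (intro powr_mono2') auto
    then show "Gd r e \<ge> 0" unfolding Gd_def b_def[symmetric] using K by (intro mult_nonneg_nonneg) auto
  qed
  ultimately show ?thesis
  proof (intro conjI impI)
    assume "r \<le> 0" then have "- Gd r e \<ge> 0" using \<open>r \<le> 0 \<Longrightarrow> Gd r e \<le> 0\<close> by simp
    then show "phi r e \<ge> 0" unfolding phi_def by (rule divide_nonneg_pos[OF _ hp])
  next
    assume "r \<ge> 0" then have "- Gd r e \<le> 0" using \<open>r \<ge> 0 \<Longrightarrow> Gd r e \<ge> 0\<close> by simp
    then show "phi r e \<le> 0" unfolding phi_def by (rule divide_nonpos_pos[OF _ hp])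
  qed
qed

definition eC :: "real \<Rightarrow> real" where "eC C = bin_entropy_inv (1 - C)"

lemma F_eq: "F_bsc r C = Gf r (eC C)"
  by (simp add: F_bsc_def Gf_def eC_def Let_def)

lemma eC_props: "0 \<le> C \<Longrightarrow> C \<le> 1 \<Longrightarrow> eC C \<in> {0..1/2} \<and> bin_entropy (eC C) = 1 - C"
  unfolding eC_def by (rule Hinv) auto

lemma eC_anti: "0 \<le> C1 \<Longrightarrow> C1 < C2 \<Longrightarrow> C2 \<le> 1 \<Longrightarrow> eC C2 < eC C1"
  unfolding eC_def by (rule Hinv_mono) auto

lemma slope:
  assumes r: "r > -1" and C: "0 \<le> C1" "C1 < C2" "C2 \<le> 1"
  shows "\<exists>\<xi>. eC C2 < \<xi> \<and> \<xi> < eC C1 \<and> F_bsc r C2 - F_bsc r C1 = (C2 - C1) * phi r \<xi>"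
proof -
  define e1 where "e1 = eC C1"
  define e2 where "e2 = eC C2"
  have p1: "e1 \<in> {0..1/2}" "bin_entropy e1 = 1 - C1" using eC_props[of C1] C by (auto simp: e1_def)
  have p2: "e2 \<in> {0..1/2}" "bin_entropy e2 = 1 - C2" using eC_props[of C2] C by (auto simp: e2_def)
  have lt: "e2 < e1" using eC_anti[OF C] by (simp add: e1_def e2_def)
  have sub: "{e2..e1} \<subseteq> {0..1/2}" using p1 p2 by auto
  obtain x where x: "e2 < x" "x < e1"
     "(Gf r e1 - Gf r e2) * ((ln (1 - x) - ln x) / ln 2) = (bin_entropy e1 - bin_entropy e2) * Gd r x"
  proof -
    have "\<exists>x. e2 < x \<and> x < e1 \<and> (Gf r e1 - Gf r e2) * ((ln (1 - x) - ln x) / ln 2) = (bin_entropy e1 - bin_entropy e2) * Gd r x"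
    proof (rule cmvt[OF lt])
      show "continuous_on {e2..e1} (Gf r)" using continuous_on_subset[OF G_cont[OF r] sub] .
      show "continuous_on {e2..e1} bin_entropy" using continuous_on_subset[OF H_cont sub] .
    next
      fix x assume "e2 < x" "x < e1"
      then have "0 < x" "x < 1" using p1 p2 by auto
      then show "(Gf r has_real_derivative Gd r x) (at x)" "(bin_entropy has_real_derivative (ln (1 - x) - ln x) / ln 2) (at x)"
        using G_deriv[OF r] H_deriv by auto
    qed
    then show ?thesis using that by blast
  qed
  have x0: "0 < x" "x < 1/2" using x p1 p2 by auto
  have hp: "(ln (1 - x) - ln x) / ln 2 > 0" using s_pos[OF x0] by simp
  have "Gf r e1 - Gf r e2 = (C2 - C1) * (Gd r x / ((ln (1 - x) - ln x) / ln 2))"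
    using x(3) hp p1 p2 by (simp add: field_simps)
  then have "Gf r e2 - Gf r e1 = (C2 - C1) * phi r x" unfolding phi_def by (simp add: algebra_simps)
  then show ?thesis using x unfolding F_eq e1_def e2_def by blast
qed

lemma xi_range: "eC C2 < \<xi> \<Longrightarrow> \<xi> < eC C1 \<Longrightarrow> 0 \<le> C1 \<Longrightarrow> C1 \<le> 1 \<Longrightarrow> 0 \<le> C2 \<Longrightarrow> C2 \<le> 1 \<Longrightarrow> 0 < \<xi> \<and> \<xi> < 1/2"
  using eC_props[of C1] eC_props[of C2] by auto

theorem lemma1:
  fixes \<rho> :: real
  assumes "\<rho> > -1"
  shows "concave_on {0..1} (F_bsc \<rho>)
     \<and> (\<rho> \<le> 0 \<longrightarrow> mono_on {0..1} (F_bsc \<rho>))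
     \<and> (\<rho> \<ge> 0 \<longrightarrow> antimono_on {0..1} (F_bsc \<rho>))"
proof (intro conjI impI)
  show "concave_on {0..1} (F_bsc \<rho>)"
  proof (rule concave_on_linorderI)
    fix t x y :: real assume t: "0 < t" "t < 1" and xy: "x \<in> {0..1}" "y \<in> {0..1}" "x < y"
    define z where "z = (1 - t) * x + t * y"
    define d where "d = y - x"
    have d0: "d > 0" using xy by (simp add: d_def)
    have zx: "z - x = t * d" by (simp add: z_def d_def algebra_simps)
    have yz: "y - z = (1 - t) * d" by (simp add: z_def d_def algebra_simps)
    have "t * d > 0" using t d0 by simp
    then have xz: "x < z" using zx by linarith
    have "(1 - t) * d > 0" using t d0 by simp
    then have zy: "z < y" using yz by linarith
    obtain \<xi>1 where \<xi>1: "eC z < \<xi>1" "\<xi>1 < eC x" "F_bsc \<rho> z - F_bsc \<rho> x = (z - x) * phi \<rho> \<xi>1"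
      using slope[OF assms _ xz] xy zy by auto
    obtain \<xi>2 where \<xi>2: "eC y < \<xi>2" "\<xi>2 < eC z" "F_bsc \<rho> y - F_bsc \<rho> z = (y - z) * phi \<rho> \<xi>2"
      using slope[OF assms _ zy] xy xz by auto
    have r1: "0 < \<xi>1 \<and> \<xi>1 < 1/2" using xi_range[OF \<xi>1(1,2)] xy xz zy by auto
    have r2: "0 < \<xi>2 \<and> \<xi>2 < 1/2" using xi_range[OF \<xi>2(1,2)] xy xz zy by auto
    have ph: "phi \<rho> \<xi>2 \<le> phi \<rho> \<xi>1" using phi_mono[OF assms, of \<xi>2 \<xi>1] r1 r2 \<xi>1 \<xi>2 by auto
    have "t * (1 - t) * d * phi \<rho> \<xi>2 \<le> t * (1 - t) * d * phi \<rho> \<xi>1"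
      using ph t d0 by (intro mult_left_mono) auto
    moreover have hx: "F_bsc \<rho> x = F_bsc \<rho> z - t * d * phi \<rho> \<xi>1" using \<xi>1(3) unfolding zx by simp
    moreover have hy: "F_bsc \<rho> y = F_bsc \<rho> z + (1 - t) * d * phi \<rho> \<xi>2" using \<xi>2(3) unfolding yz by simp
    ultimately have eq: "(1 - t) * F_bsc \<rho> x + t * F_bsc \<rho> y
        = F_bsc \<rho> z - t * (1 - t) * d * phi \<rho> \<xi>1 + t * (1 - t) * d * phi \<rho> \<xi>2"
      by (subst hx, subst hy) (simp add: algebra_simps)
    have "(1 - t) * F_bsc \<rho> x + t * F_bsc \<rho> y \<le> F_bsc \<rho> z"
      using eq \<open>t * (1 - t) * d * phi \<rho> \<xi>2 \<le> t * (1 - t) * d * phi \<rho> \<xi>1\<close> by linarith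
    then show "(1 - t) * F_bsc \<rho> x + t * F_bsc \<rho> y \<le> F_bsc \<rho> ((1 - t) *\<^sub>R x + t *\<^sub>R y)"
      by (simp add: z_def)
  qed (simp add: convex_real_interval)
next
  assume r0: "\<rho> \<le> 0"
  show "mono_on {0..1} (F_bsc \<rho>)"
  proof (rule mono_onI)
    fix x y :: real assume xy: "x \<in> {0..1}" "y \<in> {0..1}" "x \<le> y"
    show "F_bsc \<rho> x \<le> F_bsc \<rho> y"
    proof (cases "x = y")
      case False
      then have lt: "x < y" using xy by simp
      obtain \<xi> where \<xi>: "eC y < \<xi>" "\<xi> < eC x" "F_bsc \<rho> y - F_bsc \<rho> x = (y - x) * phi \<rho> \<xi>"
        using slope[OF assms _ lt] xy by auto
      have "0 < \<xi> \<and> \<xi> < 1/2" using xi_range[OF \<xi>(1,2)] xy by auto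
      then have "phi \<rho> \<xi> \<ge> 0" using phi_sign[OF assms, of \<xi>] r0 by auto
      then have "(y - x) * phi \<rho> \<xi> \<ge> 0" using lt by simp
      then show ?thesis using \<xi>(3) by simp
    qed simp
  qed
next
  assume r0: "\<rho> \<ge> 0"
  show "antimono_on {0..1} (F_bsc \<rho>)"
  proof (rule monotone_onI)
    fix x y :: real assume xy: "x \<in> {0..1}" "y \<in> {0..1}" "x \<le> y"
    show "F_bsc \<rho> y \<le> F_bsc \<rho> x"
    proof (cases "x = y")
      case False
      then have lt: "x < y" using xy by simp
      obtain \<xi> where \<xi>: "eC y < \<xi>" "\<xi> < eC x" "F_bsc \<rho> y - F_bsc \<rho> x = (y - x) * phi \<rho> \<xi>"
        using slope[OF assms _ lt] xy by auto
      have "0 < \<xi> \<and> \<xi> < 1/2" using xi_range[OF \<xi>(1,2)] xy by auto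
      then have "phi \<rho> \<xi> \<le> 0" using phi_sign[OF assms, of \<xi>] r0 by auto
      then have "(y - x) * phi \<rho> \<xi> \<le> 0" using lt by (simp add: mult_nonneg_nonpos)
      then show ?thesis using \<xi>(3) by simp
    qed simp
  qed
qed


end
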